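(* Let $H$ be a numerical semigroup, $k$ a field, and $R=k[H]$ Gorenstein, with $c=\mathrm{c}(H)$. Let $\mathcal{X}_R$ be the set of graded ideals $I$ of $R$ with $R/I$ Gorenstein and $\mu_R(I)\ge 2$, and for an $R$-module $M$ let $[M]$ denote its isomorphism class as an $R$-module. Then $$\{[I]\mid I\in\mathcal{X}_R\}=\{[R:_Rt^m]\mid m\in\mathbb{N}\setminus H\}\quad\text{and}\quad \#\{[I]\mid I\in\mathcal{X}_R\}=\frac{c}{2}.$$
   Context: $R=k[H]=k[t^h\mid h\in H]\subseteq k[t]$ graded by $\deg t=1$; $R:_Rt^m=\{x\in R\mid xt^m\in R\}$; $\mathrm{c}(H)=\min\{n\mid m\in H\ \forall m\ge n\}$ is the conductor of $H$. *)

theory Defs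
  imports "HOL-Computational_Algebra.Polynomial"
begin

definition numerical_semigroup :: "nat set \<Rightarrow> bool" where
  "numerical_semigroup H \<longleftrightarrow> 0 \<in> H \<and> (\<forall>a\<in>H. \<forall>b\<in>H. a + b \<in> H) \<and> finite (UNIV - H)"

definition conductor :: "nat set \<Rightarrow> nat" where
  "conductor H = (LEAST n. \<forall>m\<ge>n. m \<in> H)"

(* R = k[H] = k[t^h | h \<in> H] inside k[t] *)
definition sgring :: "nat set \<Rightarrow> 'a::field poly set" where
  "sgring H = {p. \<forall>n. coeff p n \<noteq> 0 \<longrightarrow> n \<in> H}"

definition is_Rsubmodule :: "nat set \<Rightarrow> 'a::field poly set \<Rightarrow> bool" where
  "is_Rsubmodule H M \<longleftrightarrow> 0 \<in> M \<and> (\<forall>x\<in>M. \<forall>y\<in>M. x + y \<in> M)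
     \<and> (\<forall>r\<in>sgring H. \<forall>x\<in>M. r * x \<in> M)"

definition is_ideal :: "nat set \<Rightarrow> 'a::field poly set \<Rightarrow> bool" where
  "is_ideal H I \<longleftrightarrow> I \<subseteq> sgring H \<and> is_Rsubmodule H I"

(* graded ideal (deg t = 1): closed under taking homogeneous components *)
definition graded_ideal :: "nat set \<Rightarrow> 'a::field poly set \<Rightarrow> bool" where
  "graded_ideal H I \<longleftrightarrow> is_ideal H I \<and> (\<forall>x\<in>I. \<forall>n. monom (coeff x n) n \<in> I)"

definition homog_max :: "nat set \<Rightarrow> 'a::field poly set" where
  "homog_max H = {p \<in> sgring H. coeff p 0 = 0}"

definition colon :: "nat set \<Rightarrow> 'a::field poly set \<Rightarrow> 'a poly set \<Rightarrow> 'a poly set" where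
  "colon H I J = {x \<in> sgring H. \<forall>y\<in>J. x * y \<in> I}"

definition quot_dim_one :: "'a::field poly set \<Rightarrow> 'a poly set \<Rightarrow> bool" where
  "quot_dim_one J I \<longleftrightarrow> (\<exists>s\<in>J. s \<notin> I \<and> (\<forall>x\<in>J. \<exists>a. x - smult a s \<in> I))"

(* R/I Gorenstein, for I with R/I Artinian local with maximal ideal m/I:
   the socle (I :_R m)/I of R/I is one-dimensional over k = R/m *)
definition gorenstein_quot :: "nat set \<Rightarrow> 'a::field poly set \<Rightarrow> bool" where
  "gorenstein_quot H I \<longleftrightarrow> quot_dim_one (colon H I (homog_max H)) I"

definition principal_ideal :: "nat set \<Rightarrow> 'a::field poly \<Rightarrow> 'a poly set" where
  "principal_ideal H x = {r * x | r. r \<in> sgring H}"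

(* R = k[H] Gorenstein: R/t^h R is Gorenstein (Artinian) for some h \<in> H, h > 0
   (t^h a homogeneous nonzerodivisor in m) *)
definition gorenstein_sgring :: "'a::field itself \<Rightarrow> nat set \<Rightarrow> bool" where
  "gorenstein_sgring (_::'a itself) H \<longleftrightarrow>
     (\<exists>h\<in>H. h > 0 \<and> gorenstein_quot H (principal_ideal H (monom (1::'a) h)))"

definition mu :: "nat set \<Rightarrow> 'a::field poly set \<Rightarrow> nat" where
  "mu H I = (LEAST n. \<exists>gs. length gs = n \<and>
     I = {\<Sum>i<n. r i * gs ! i | r. \<forall>i<n. r i \<in> sgring H})"

definition colon_monom :: "nat set \<Rightarrow> nat \<Rightarrow> 'a::field poly set" where
  "colon_monom H m = {x \<in> sgring H. x * monom 1 m \<in> sgring H}"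

definition module_iso :: "nat set \<Rightarrow> 'a::field poly set \<Rightarrow> 'a poly set \<Rightarrow> bool" where
  "module_iso H M N \<longleftrightarrow> (\<exists>f. bij_betw f M N \<and> (\<forall>x\<in>M. \<forall>y\<in>M. f (x + y) = f x + f y)
      \<and> (\<forall>r\<in>sgring H. \<forall>x\<in>M. f (r * x) = r * f x))"

(* isomorphism class [M], represented by the R-submodules of k[t] isomorphic to M *)
definition iso_class :: "nat set \<Rightarrow> 'a::field poly set \<Rightarrow> 'a poly set set" where
  "iso_class H M = {N. is_Rsubmodule H N \<and> module_iso H M N}"

definition X_R :: "nat set \<Rightarrow> 'a::field poly set set" where
  "X_R H = {I. graded_ideal H I \<and> gorenstein_quot H I \<and> mu H I \<ge> 2}"

end

theory Submission
  imports Defs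
begin

definition ms :: "nat set \<Rightarrow> 'a::field poly set" where
  "ms E = {p. \<forall>n. coeff p n \<noteq> 0 \<longrightarrow> n \<in> E}"

lemma sgring_ms: "sgring H = ms H"
  unfolding sgring_def ms_def by simp

lemma monom_in_mono: "monom c n \<in> ms E \<longleftrightarrow> c = 0 \<or> n \<in> E"
  unfolding ms_def by auto

lemma zero_in_mono: "0 \<in> ms E"
  unfolding ms_def by simp

lemma add_in_mono: "p \<in> ms E \<Longrightarrow> q \<in> ms E \<Longrightarrow> p + q \<in> ms E"
  unfolding ms_def by (auto simp: coeff_add) (metis add.right_neutral)

lemma diff_in_mono: "p \<in> ms E \<Longrightarrow> q \<in> ms E \<Longrightarrow> p - q \<in> ms E"
  unfolding ms_def by (auto simp: coeff_diff) (metis diff_zero)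

lemma smult_in_mono: "p \<in> ms E \<Longrightarrow> smult a p \<in> ms E"
  unfolding ms_def by auto

lemma sum_nonzero: "sum f A \<noteq> 0 \<Longrightarrow> \<exists>i\<in>A. f i \<noteq> 0"
  by (meson sum.neutral)

lemma mult_in_mono:
  assumes "\<forall>i\<in>A. \<forall>j\<in>B. i + j \<in> C" "p \<in> ms A" "q \<in> ms B"
  shows "p * q \<in> ms C"
  unfolding ms_def
proof (intro allI impI CollectI)
  fix n assume "coeff (p * q) n \<noteq> 0"
  then obtain i where i: "i \<le> n" "coeff p i * coeff q (n - i) \<noteq> 0"
    unfolding coeff_mult using sum_nonzero by fastforce
  then have "i \<in> A" "n - i \<in> B" using assms(2,3) unfolding ms_def by auto
  then show "n \<in> C" using assms(1) i(1) by (metis le_add_diff_inverse)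
qed

lemma addclosed_sum:
  assumes "0 \<in> M" "\<forall>x\<in>M. \<forall>y\<in>M. x + y \<in> M" "\<forall>i\<in>A. f i \<in> M"
  shows "sum f A \<in> M"
proof (cases "finite A")
  case True
  then show ?thesis using assms(3)
    by (induction A rule: finite_induct) (auto simp: assms(1,2))
qed (simp add: assms(1))

lemma mono_sum_monoms:
  fixes p :: "'a::field poly"
  assumes "0 \<in> M" "\<forall>x\<in>M. \<forall>y\<in>M. x + y \<in> M"
    "\<And>n. coeff p n \<noteq> 0 \<Longrightarrow> monom (coeff p n) n \<in> M"
  shows "p \<in> M"
proof -
  have "(\<Sum>i\<le>degree p. monom (coeff p i) i) \<in> M"
    apply (rule addclosed_sum[OF assms(1,2)])
    using assms(1,3) by (metis monom_eq_0)
  then show ?thesis by (simp add: poly_as_sum_of_monoms)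
qed

lemma shift_exists:
  fixes p :: "'a::field poly"
  assumes "\<And>n. coeff p n \<noteq> 0 \<Longrightarrow> d \<le> n \<and> n - d \<in> S"
  shows "\<exists>y\<in>ms S. p = monom 1 d * y"
proof -
  define y where "y = (\<Sum>n\<le>degree p. monom (coeff p n) (n - d))"
  have "y \<in> ms S" unfolding y_def
    apply (rule addclosed_sum)
    using assms by (auto simp: zero_in_mono add_in_mono monom_in_mono)
  moreover have "monom 1 d * y = p"
  proof -
    have "monom 1 d * y = (\<Sum>n\<le>degree p. monom 1 d * monom (coeff p n) (n - d))"
      unfolding y_def by (simp add: sum_distrib_left)
    also have "\<dots> = (\<Sum>n\<le>degree p. monom (coeff p n) n)"
    proof (intro sum.cong refl)
      fix n show "monom 1 d * monom (coeff p n) (n - d) = monom (coeff p n) n"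
        using assms[of n] by (cases "coeff p n = 0") (auto simp: mult_monom)
    qed
    finally show ?thesis by (simp add: poly_as_sum_of_monoms)
  qed
  ultimately show ?thesis by auto
qed

lemma dvd_monom:
  fixes g :: "'a::field poly"
  shows "y * g = monom b N \<Longrightarrow> b \<noteq> 0 \<Longrightarrow> \<exists>a d. a \<noteq> 0 \<and> g = monom a d"
proof (induction N arbitrary: y g)
  case 0
  then have "degree (y * g) = 0" by (simp add: monom_0)
  moreover have "y \<noteq> 0" "g \<noteq> 0" using 0 by auto
  ultimately have "degree g = 0" by (simp add: degree_mult_eq)
  then have "g = [:coeff g 0:]" by (metis degree_0_id)
  then show ?case using \<open>g \<noteq> 0\<close> by (metis monom_0 pCons_eq_0_iff)
next
  case (Suc N)
  have "coeff (y * g) 0 = 0" using Suc.prems by simp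
  then have "coeff y 0 = 0 \<or> coeff g 0 = 0" by (simp add: coeff_mult)
  then show ?case
  proof
    assume "coeff y 0 = 0"
    then obtain y' where "y = pCons 0 y'" by (metis pCons_cases coeff_pCons_0)
    then have "pCons 0 (y' * g) = pCons 0 (monom b N)" using Suc.prems by (simp add: monom_Suc)
    then show ?thesis using Suc by auto
  next
    assume "coeff g 0 = 0"
    then obtain g' where g': "g = pCons 0 g'" by (metis pCons_cases coeff_pCons_0)
    then have "pCons 0 (y * g') = pCons 0 (monom b N)" using Suc.prems by (simp add: monom_Suc)
    then have "y * g' = monom b N" by simp
    then obtain a d where "a \<noteq> 0" "g' = monom a d" using Suc.IH Suc.prems(2) by blast
    then show ?thesis using g' \<open>a \<noteq> 0\<close> by (metis monom_Suc)
  qed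
qed

definition soc :: "nat set \<Rightarrow> nat set \<Rightarrow> nat \<Rightarrow> bool" where
  "soc H E n \<longleftrightarrow> n \<in> H \<and> n \<notin> E \<and> (\<forall>k\<in>H. 0 < k \<longrightarrow> n + k \<in> E)"

lemma mono_mono: "A \<subseteq> B \<Longrightarrow> ms A \<subseteq> ms B"
  unfolding ms_def by auto

lemma graded_ideal_mono:
  assumes "E \<subseteq> H" "\<forall>e\<in>E. \<forall>h\<in>H. e + h \<in> E"
  shows "graded_ideal H (ms E :: 'a::field poly set)"
proof -
  have "r * x \<in> ms E" if "r \<in> sgring H" "x \<in> ms E" for r x :: "'a poly"
    apply (rule mult_in_mono[of H E E])
    using that apply (simp_all add: sgring_ms)
    using assms(2) by (metis add.commute)
  then show ?thesis
    unfolding graded_ideal_def is_ideal_def is_Rsubmodule_def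
    using mono_mono[OF assms(1)]
    by (auto simp: sgring_ms zero_in_mono add_in_mono monom_in_mono) (auto simp: ms_def)
qed

lemma const_in_sgring: "0 \<in> H \<Longrightarrow> [:a:] \<in> sgring H"
  unfolding sgring_def by (auto simp: coeff_pCons split: nat.splits)

lemma const_mult_monom: "[:a:] * monom c n = monom (a * c) n"
  by (metis monom_0 mult_monom add_0)

lemma graded_mono:
  fixes I :: "'a::field poly set"
  assumes "graded_ideal H I" "0 \<in> H"
  shows "I = ms {n. monom 1 n \<in> I}"
proof (rule equalityI)
  have I: "\<forall>r\<in>sgring H. \<forall>x\<in>I. r * x \<in> I" "0 \<in> I" "\<forall>x\<in>I. \<forall>y\<in>I. x + y \<in> I"
     "\<forall>x\<in>I. \<forall>n. monom (coeff x n) n \<in> I"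
    using assms(1) unfolding graded_ideal_def is_ideal_def is_Rsubmodule_def by auto
  show "I \<subseteq> ms {n. monom 1 n \<in> I}"
  proof
    fix x :: "'a poly" assume x: "x \<in> I"
    show "x \<in> ms {n. monom 1 n \<in> I}"
      unfolding ms_def
    proof (rule CollectI, intro allI impI)
      fix n assume c: "coeff x n \<noteq> 0"
      have "[:1 / coeff x n:] * monom (coeff x n) n \<in> I"
        using I x const_in_sgring[OF assms(2)] by blast
      then show "n \<in> {n. monom 1 n \<in> I}" using c by (simp add: const_mult_monom smult_monom)
    qed
  qed
  show "ms {n. monom 1 n \<in> I} \<subseteq> I"
  proof
    fix p :: "'a poly" assume p: "p \<in> ms {n. monom 1 n \<in> I}"
    show "p \<in> I"
    proof (rule mono_sum_monoms[OF I(2) I(3)])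
      fix n assume "coeff p n \<noteq> 0"
      then have "monom 1 n \<in> I" using p unfolding ms_def by auto
      then have "[:coeff p n:] * monom 1 n \<in> I" using I const_in_sgring[OF assms(2)] by blast
      then show "monom (coeff p n) n \<in> I" by (simp add: const_mult_monom smult_monom)
    qed
  qed
qed

lemma colon_mono:
  assumes "E \<subseteq> H"
  shows "colon H (ms E) (homog_max H) = (ms {n\<in>H. \<forall>k\<in>H. 0<k \<longrightarrow> n+k \<in> E} :: 'a::field poly set)"
proof (rule equalityI)
  show "colon H (ms E) (homog_max H) \<subseteq> (ms {n\<in>H. \<forall>k\<in>H. 0<k \<longrightarrow> n+k \<in> E} :: 'a poly set)"
  proof
    fix x :: "'a poly" assume x: "x \<in> colon H (ms E) (homog_max H)"
    show "x \<in> ms {n\<in>H. \<forall>k\<in>H. 0<k \<longrightarrow> n+k \<in> E}"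
      unfolding ms_def
    proof (rule CollectI, intro allI impI)
      fix n assume c: "coeff x n \<noteq> 0"
      have nH: "n \<in> H" using x c unfolding colon_def sgring_def by auto
      have "n + k \<in> E" if k: "k \<in> H" "0 < k" for k
      proof -
        have "monom 1 k \<in> homog_max H" using k unfolding homog_max_def sgring_def by auto
        then have "x * monom 1 k \<in> ms E" using x unfolding colon_def by auto
        then have "monom 1 k * x \<in> ms E" by (simp add: mult.commute)
        moreover have "coeff (monom 1 k * x) (n + k) \<noteq> 0" using c by (simp add: coeff_monom_mult)
        ultimately show "n + k \<in> E" unfolding ms_def by auto
      qed
      then show "n \<in> {n\<in>H. \<forall>k\<in>H. 0<k \<longrightarrow> n+k \<in> E}" using nH by auto
    qed
  qed
  show "(ms {n\<in>H. \<forall>k\<in>H. 0<k \<longrightarrow> n+k \<in> E} :: 'a poly set) \<subseteq> colon H (ms E) (homog_max H)"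
  proof
    fix x :: "'a poly" assume x: "x \<in> ms {n\<in>H. \<forall>k\<in>H. 0<k \<longrightarrow> n+k \<in> E}"
    have "x \<in> sgring H" using x unfolding sgring_ms ms_def by auto
    moreover have "x * y \<in> ms E" if y: "y \<in> homog_max H" for y
      unfolding ms_def
    proof (rule CollectI, intro allI impI)
      fix n assume "coeff (x * y) n \<noteq> 0"
      then obtain i where i: "i \<le> n" "coeff x i * coeff y (n - i) \<noteq> 0"
        unfolding coeff_mult using sum_nonzero by fastforce
      then have "i \<in> {n\<in>H. \<forall>k\<in>H. 0<k \<longrightarrow> n+k \<in> E}" "n - i \<in> H" "n - i \<noteq> 0"
        using x y unfolding ms_def homog_max_def sgring_def by auto
      then have "i + (n - i) \<in> E" by auto
      then show "n \<in> E" using i(1) by simp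
    qed
    ultimately show "x \<in> colon H (ms E) (homog_max H)" unfolding colon_def by auto
  qed
qed

lemma qd_mono1:
  assumes "quot_dim_one (ms S :: 'a::field poly set) (ms E)" shows "(\<exists>!n. n \<in> S \<and> n \<notin> E)"
proof -
  note assms
  then obtain s :: "'a poly" where s: "s \<in> ms S" "s \<notin> ms E" "\<forall>x\<in>ms S. \<exists>a. x - smult a s \<in> ms E"
    unfolding quot_dim_one_def by auto
  then obtain n0 where n0: "coeff s n0 \<noteq> 0" "n0 \<notin> E" unfolding ms_def by auto
  then have n0S: "n0 \<in> S" using s(1) unfolding ms_def by auto
  have uniq: "n1 = n0" if n1: "n1 \<in> S" "n1 \<notin> E" for n1
  proof (rule ccontr)
    assume ne: "n1 \<noteq> n0"
    have "monom 1 n1 \<in> (ms S :: 'a poly set)" using n1 by (simp add: monom_in_mono)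
    then obtain a where a: "monom 1 n1 - smult a s \<in> ms E" using s(3) by blast
    have a': "\<forall>n. coeff (monom 1 n1 - smult a s) n \<noteq> 0 \<longrightarrow> n \<in> E" using a unfolding ms_def by simp
    have "coeff (monom 1 n1 - smult a s) n0 = 0" using a' n0(2) by blast
    then have "a = 0" using ne n0 by simp
    have "coeff (monom 1 n1 - smult a s) n1 = 0" using a' n1(2) by blast
    then show False using \<open>a = 0\<close> by simp
  qed
  show "\<exists>!n. n \<in> S \<and> n \<notin> E"
  proof (rule ex1I[of _ n0])
    show "n0 \<in> S \<and> n0 \<notin> E" using n0S n0(2) by simp
    fix n assume nn: "n \<in> S \<and> n \<notin> E"
    show "n = n0" by (rule uniq) (use nn in auto)
  qed
qed

lemma qd_mono2:
  assumes "\<exists>!n. n \<in> S \<and> n \<notin> E" shows "quot_dim_one (ms S :: 'a::field poly set) (ms E)"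
proof -
  note assms
  then obtain n0 where n0: "n0 \<in> S" "n0 \<notin> E" "\<And>n. n \<in> S \<Longrightarrow> n \<notin> E \<Longrightarrow> n = n0" by blast
  have m1: "monom 1 n0 \<in> (ms S :: 'a poly set)" "monom 1 n0 \<notin> (ms E :: 'a poly set)"
    using n0(1,2) by (auto simp: monom_in_mono)
  have m2: "\<exists>a. x - smult a (monom 1 n0) \<in> ms E" if x: "x \<in> ms S" for x :: "'a poly"
  proof (intro exI[of _ "coeff x n0"])
    show "x - smult (coeff x n0) (monom 1 n0) \<in> ms E"
      unfolding ms_def
    proof (rule CollectI, intro allI impI)
      fix n assume c: "coeff (x - smult (coeff x n0) (monom 1 n0)) n \<noteq> 0"
      have "n \<noteq> n0"
      proof
        assume "n = n0" then show False using c by simp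
      qed
      moreover have "coeff x n \<noteq> 0" using c \<open>n \<noteq> n0\<close> by simp
      then have "n \<in> S" using x unfolding ms_def by auto
      ultimately show "n \<in> E" using n0(3) by blast
    qed
  qed
  show "quot_dim_one (ms S :: 'a poly set) (ms E)" unfolding quot_dim_one_def
    using m1 m2 by blast
qed

lemma qd_mono: "quot_dim_one (ms S :: 'a::field poly set) (ms E) \<longleftrightarrow> (\<exists>!n. n \<in> S \<and> n \<notin> E)"
  using qd_mono1 qd_mono2 by blast


lemma gor_mono:
  assumes "E \<subseteq> H"
  shows "gorenstein_quot H (ms E :: 'a::field poly set) \<longleftrightarrow> (\<exists>!n. soc H E n)"
proof -
  have eq: "\<And>n. (n \<in> {n\<in>H. \<forall>k\<in>H. 0<k \<longrightarrow> n+k \<in> E} \<and> n \<notin> E) = soc H E n"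
    unfolding soc_def by blast
  show ?thesis
    unfolding gorenstein_quot_def colon_mono[OF assms] qd_mono by (simp only: eq)
qed

lemma ns_0: "numerical_semigroup H \<Longrightarrow> 0 \<in> H"
  unfolding numerical_semigroup_def by auto

lemma ns_add: "numerical_semigroup H \<Longrightarrow> a \<in> H \<Longrightarrow> b \<in> H \<Longrightarrow> a + b \<in> H"
  unfolding numerical_semigroup_def by auto

lemma ns_mult: "numerical_semigroup H \<Longrightarrow> a \<in> H \<Longrightarrow> k * a \<in> H"
  by (induction k) (auto simp: ns_0 ns_add)

lemma ns_cond: "numerical_semigroup H \<Longrightarrow> \<exists>N. \<forall>n\<ge>N. n \<in> H"
proof -
  assume "numerical_semigroup H"
  then have "finite (UNIV - H)" unfolding numerical_semigroup_def by auto
  then obtain N where "\<forall>n\<in>UNIV - H. n < N" using finite_nat_set_iff_bounded by blast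
  then show ?thesis by (metis DiffI UNIV_I not_le)
qed

lemma max_soc:
  assumes NS: "numerical_semigroup H" and N: "\<forall>j\<ge>N. j \<in> E"
    and s0: "soc H E n0" and u: "\<forall>n. soc H E n \<longrightarrow> n = n0"
    and n: "n \<in> H" "n \<notin> E"
  shows "n \<le> n0 \<and> n0 - n \<in> H"
proof -
  define B where "B = {b\<in>H. n + b \<notin> E}"
  have fin: "finite B"
  proof (rule finite_subset)
    show "B \<subseteq> {..<N}" unfolding B_def using N by (auto simp: not_less) (metis le_add2 le_trans not_le)
  qed simp
  have "0 \<in> B" unfolding B_def using n ns_0[OF NS] by simp
  define bm where "bm = Max B"
  have bm: "bm \<in> B" unfolding bm_def using fin \<open>0 \<in> B\<close> by (intro Max_in) auto
  have "soc H E (n + bm)"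
    unfolding soc_def
  proof (intro conjI ballI impI)
    show "n + bm \<in> H" using bm n NS unfolding B_def by (simp add: ns_add)
    show "n + bm \<notin> E" using bm unfolding B_def by simp
    fix k assume k: "k \<in> H" "0 < k"
    show "n + bm + k \<in> E"
    proof (rule ccontr)
      assume "n + bm + k \<notin> E"
      then have "bm + k \<in> B" using bm k NS unfolding B_def by (simp add: ns_add add.assoc)
      then have "bm + k \<le> bm" unfolding bm_def using fin by (intro Max_ge)
      then show False using k by simp
    qed
  qed
  then have "n + bm = n0" using u by blast
  then show ?thesis using bm unfolding B_def by auto
qed

definition symF :: "nat set \<Rightarrow> nat \<Rightarrow> bool" where
  "symF H F \<longleftrightarrow> F \<notin> H \<and> (\<forall>x. x \<notin> H \<longrightarrow> x \<le> F \<and> F - x \<in> H)"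

lemma principal_ms:
  "principal_ideal H (monom 1 h) = (ms {n. h \<le> n \<and> n - h \<in> H} :: 'a::field poly set)"
proof (rule equalityI)
  show "principal_ideal H (monom 1 h) \<subseteq> (ms {n. h \<le> n \<and> n - h \<in> H} :: 'a poly set)"
  proof
    fix p :: "'a poly" assume "p \<in> principal_ideal H (monom 1 h)"
    then obtain r where r: "r \<in> sgring H" "p = r * monom 1 h" unfolding principal_ideal_def by auto
    show "p \<in> ms {n. h \<le> n \<and> n - h \<in> H}" unfolding r(2)
      by (rule mult_in_mono[of H "{h}"]) (use r(1) in \<open>auto simp: sgring_ms monom_in_mono\<close>)
  qed
  show "(ms {n. h \<le> n \<and> n - h \<in> H} :: 'a poly set) \<subseteq> principal_ideal H (monom 1 h)"
  proof
    fix p :: "'a poly" assume "p \<in> ms {n. h \<le> n \<and> n - h \<in> H}"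
    then obtain y where "y \<in> ms H" "p = monom 1 h * y"
      using shift_exists[of p h H] unfolding ms_def by auto
    then show "p \<in> principal_ideal H (monom 1 h)"
      unfolding principal_ideal_def sgring_ms by (auto simp: mult.commute)
  qed
qed

lemma sym_exists:
  assumes NS: "numerical_semigroup H" and G: "gorenstein_sgring TYPE('a::field) H"
    and x0: "x0 \<notin> H"
  shows "\<exists>F. symF H F"
proof -
  obtain h where h: "h \<in> H" "0 < h" "gorenstein_quot H (principal_ideal H (monom (1::'a) h))"
    using G unfolding gorenstein_sgring_def by auto
  define Eh where "Eh = {n. h \<le> n \<and> n - h \<in> H}"
  have EhH: "Eh \<subseteq> H"
  proof
    fix n assume "n \<in> Eh"
    then have "h \<le> n" "n - h \<in> H" unfolding Eh_def by auto
    then have "(n - h) + h \<in> H" using ns_add[OF NS _ h(1)] by blast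
    then show "n \<in> H" using \<open>h \<le> n\<close> by simp
  qed
  have "gorenstein_quot H (ms Eh :: 'a poly set)" using h(3) unfolding principal_ms Eh_def .
  then have "\<exists>!n. soc H Eh n" using gor_mono[OF EhH] by blast
  then obtain w where w: "soc H Eh w" "\<forall>n. soc H Eh n \<longrightarrow> n = w" by blast
  obtain N where N: "\<forall>n\<ge>N. n \<in> H" using ns_cond[OF NS] by blast
  have NE: "\<forall>j\<ge>N + h. j \<in> Eh" unfolding Eh_def using N by auto
  have key: "x + h \<le> w \<and> w - h - x \<in> H" if x: "x \<notin> H" for x
  proof -
    define P where "P k = (x + k * h \<in> H)" for k
    have "N \<le> N * h" using h(2) by simp
    then have "P N" unfolding P_def using N by (meson le_add2 le_trans)
    define k0 where "k0 = (LEAST k. P k)"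
    have Pk0: "P k0" unfolding k0_def using \<open>P N\<close> by (rule LeastI)
    have "k0 \<noteq> 0"
    proof
      assume "k0 = 0" then show False using Pk0 x unfolding P_def by simp
    qed
    then obtain k1 where k1: "k0 = Suc k1" using not0_implies_Suc by blast
    have "k1 < k0" using k1 by simp
    then have nP: "\<not> P k1" unfolding k0_def by (rule not_less_Least)
    define a where "a = x + h + k1 * h"
    have aH: "a \<in> H" using Pk0 unfolding P_def a_def k1 by (simp add: algebra_simps)
    have aE: "a \<notin> Eh" using nP unfolding Eh_def a_def P_def by auto
    have aw: "a \<le> w" "w - a \<in> H" using max_soc[OF NS NE w(1) w(2) aH aE] by auto
    have eq: "w - h - x = (w - a) + k1 * h" using aw(1) unfolding a_def by auto
    have "(w - a) + k1 * h \<in> H" using ns_add[OF NS aw(2) ns_mult[OF NS h(1)]] .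
    then have "w - h - x \<in> H" using eq by simp
    moreover have "x + h \<le> w" using aw(1) unfolding a_def by simp
    ultimately show ?thesis by simp
  qed
  have "h \<le> w" using key[OF x0] by simp
  then have "w - h \<notin> H" using w(1) unfolding soc_def Eh_def by auto
  moreover have "x \<le> w - h \<and> w - h - x \<in> H" if "x \<notin> H" for x
    using key[OF that] by (auto simp: diff_diff_left add.commute)
  ultimately have "symF H (w - h)" unfolding symF_def by blast
  then show ?thesis by blast
qed

lemma symF_iff:
  assumes NS: "numerical_semigroup H" and S: "symF H F" and y: "y \<le> F"
  shows "y \<in> H \<longleftrightarrow> F - y \<notin> H"
proof
  assume "y \<in> H"
  then show "F - y \<notin> H" using S y ns_add[OF NS, of y "F - y"] unfolding symF_def by auto
next
  assume "F - y \<notin> H"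
  then show "y \<in> H" using S y unfolding symF_def by auto
qed

lemma symF_above:
  assumes "symF H F" "F < n" shows "n \<in> H"
  using assms unfolding symF_def by (meson not_le)

lemma symF_conductor:
  assumes "symF H F" shows "conductor H = Suc F"
  unfolding conductor_def
proof (rule Least_equality)
  show "\<forall>m\<ge>Suc F. m \<in> H" using symF_above[OF assms] by auto
  fix n assume "\<forall>m\<ge>n. m \<in> H"
  then show "Suc F \<le> n" using assms unfolding symF_def by (meson not_less_eq_eq)
qed

lemma symF_card:
  assumes NS: "numerical_semigroup H" and S: "symF H F"
  shows "2 * card (UNIV - H) = Suc F"
proof -
  have G: "UNIV - H \<subseteq> {..F}" using S unfolding symF_def by auto
  have bij: "bij_betw (\<lambda>x. F - x) (UNIV - H) ({..F} \<inter> H)"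
  proof (rule bij_betw_imageI)
    show "inj_on (\<lambda>x. F - x) (UNIV - H)"
      by (rule inj_on_subset[OF _ G]) (auto simp: inj_on_def)
    show "(\<lambda>x. F - x) ` (UNIV - H) = {..F} \<inter> H"
    proof (rule equalityI)
      show "(\<lambda>x. F - x) ` (UNIV - H) \<subseteq> {..F} \<inter> H" using S unfolding symF_def by auto
      show "{..F} \<inter> H \<subseteq> (\<lambda>x. F - x) ` (UNIV - H)"
      proof
        fix y assume y: "y \<in> {..F} \<inter> H"
        then have "F - y \<notin> H" using symF_iff[OF NS S] by auto
        moreover have "y = F - (F - y)" using y by auto
        ultimately show "y \<in> (\<lambda>x. F - x) ` (UNIV - H)" by blast
      qed
    qed
  qed
  have "card {..F} = card (UNIV - H) + card ({..F} \<inter> H)"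
  proof -
    have "{..F} = (UNIV - H) \<union> ({..F} \<inter> H)" using G by auto
    moreover have "(UNIV - H) \<inter> ({..F} \<inter> H) = {}" by auto
    moreover have "finite (UNIV - H)" using G finite_subset by blast
    ultimately show ?thesis by (metis card_Un_disjoint finite_Int finite_atMost)
  qed
  then show ?thesis using bij_betw_same_card[OF bij] by simp
qed

lemma iso_refl: "module_iso H M M"
  unfolding module_iso_def by (intro exI[of _ id]) auto

lemma iso_trans:
  fixes M N P :: "'a::field poly set"
  shows "module_iso H M N \<Longrightarrow> module_iso H N P \<Longrightarrow> module_iso H M P"
proof -
  assume "module_iso H M N" "module_iso H N P"
  then obtain f g where f: "bij_betw f M N" "\<forall>x\<in>M. \<forall>y\<in>M. f (x + y) = f x + f y"
      "\<forall>r\<in>sgring H. \<forall>x\<in>M. f (r * x) = r * f x"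
    and g: "bij_betw g N P" "\<forall>x\<in>N. \<forall>y\<in>N. g (x + y) = g x + g y"
      "\<forall>r\<in>sgring H. \<forall>x\<in>N. g (r * x) = r * g x"
    unfolding module_iso_def by blast
  have fM: "\<And>x. x \<in> M \<Longrightarrow> f x \<in> N" using f(1) bij_betwE by blast
  show ?thesis unfolding module_iso_def
  proof (intro exI[of _ "g \<circ> f"] conjI ballI)
    show "bij_betw (g \<circ> f) M P" using f(1) g(1) by (rule bij_betw_trans)
    fix x y assume "x \<in> M" "y \<in> M"
    then show "(g \<circ> f) (x + y) = (g \<circ> f) x + (g \<circ> f) y" using f(2) g(2) fM by simp
  next
    fix r x :: "'a poly" assume "r \<in> sgring H" "x \<in> M"
    then show "(g \<circ> f) (r * x) = r * (g \<circ> f) x" using f(3) g(3) fM by simp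
  qed
qed

lemma iso_sym:
  fixes M N :: "'a::field poly set"
  assumes M: "is_Rsubmodule H M" and iso: "module_iso H M N"
  shows "module_iso H N M"
proof -
  obtain f where f: "bij_betw f M N" "\<forall>x\<in>M. \<forall>y\<in>M. f (x + y) = f x + f y"
      "\<forall>r\<in>sgring H. \<forall>x\<in>M. f (r * x) = r * f x"
    using iso unfolding module_iso_def by blast
  define g where "g = inv_into M f"
  have g: "bij_betw g N M" unfolding g_def using f(1) by (rule bij_betw_inv_into)
  have gN: "\<And>x. x \<in> N \<Longrightarrow> g x \<in> M" using g bij_betwE by blast
  have fg: "\<And>x. x \<in> N \<Longrightarrow> f (g x) = x" unfolding g_def using f(1)
    by (meson bij_betw_inv_into_right)
  have gf: "\<And>x. x \<in> M \<Longrightarrow> g (f x) = x" unfolding g_def using f(1)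
    by (meson bij_betw_inv_into_left)
  have Mc: "\<forall>x\<in>M. \<forall>y\<in>M. x + y \<in> M" "\<forall>r\<in>sgring H. \<forall>x\<in>M. r * x \<in> M"
    using M unfolding is_Rsubmodule_def by auto
  show ?thesis unfolding module_iso_def
  proof (intro exI[of _ g] conjI ballI)
    show "bij_betw g N M" by (rule g)
    fix x y assume xy: "x \<in> N" "y \<in> N"
    have "f (g x + g y) = x + y" using f(2) gN xy fg by simp
    then have "g (x + y) = g (f (g x + g y))" by simp
    also have "\<dots> = g x + g y" using gf Mc gN xy by simp
    finally show "g (x + y) = g x + g y" .
  next
    fix r x :: "'a poly" assume rx: "r \<in> sgring H" "x \<in> N"
    have "f (r * g x) = r * x" using f(3) gN rx fg by simp
    then have "g (r * x) = g (f (r * g x))" by simp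
    also have "\<dots> = r * g x" using gf Mc gN rx by simp
    finally show "g (r * x) = r * g x" .
  qed
qed

lemma iso_class_eq:
  fixes M N :: "'a::field poly set"
  assumes "is_Rsubmodule H M" "module_iso H M N"
  shows "iso_class H M = iso_class H N"
  unfolding iso_class_def using iso_trans iso_sym[OF assms] assms(2) by blast

lemma shift_iso:
  fixes E1 E2 :: "nat set"
  assumes E1H: "E1 \<subseteq> H" and cl: "\<forall>e\<in>E1. \<forall>h\<in>H. e + h \<in> E1" and e1: "e1 \<in> E1"
    and e2: "e2 \<in> E2" and iso: "module_iso H (ms E1 :: 'a::field poly set) (ms E2)"
  shows "\<exists>p q. (\<forall>n\<in>E2. q \<le> n + p \<and> n + p - q \<in> E1) \<and> (\<forall>m\<in>E1. p \<le> m + q \<and> m + q - p \<in> E2)"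
proof -
  obtain f :: "'a poly \<Rightarrow> 'a poly" where f: "bij_betw f (ms E1) (ms E2)" "\<forall>x\<in>ms E1. \<forall>y\<in>ms E1. f (x + y) = f x + f y"
      "\<forall>r\<in>sgring H. \<forall>x\<in>ms E1. f (r * x) = r * f x"
    using iso unfolding module_iso_def by blast
  have fM: "\<And>x. x \<in> ms E1 \<Longrightarrow> f x \<in> ms E2" using f(1) bij_betwE by blast
  have inv: "\<And>y. y \<in> ms E2 \<Longrightarrow> \<exists>x\<in>ms E1. f x = y" using f(1) unfolding bij_betw_def by (metis image_iff)
  have inj: "inj_on f (ms E1)" using f(1) unfolding bij_betw_def by auto
  have sub: "\<And>x. x \<in> ms E1 \<Longrightarrow> x \<in> sgring H" using mono_mono[OF E1H] sgring_ms by blast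
  have cl': "\<forall>i\<in>H. \<forall>j\<in>E1. i + j \<in> E1" using cl by (metis add.commute)
  define x0 :: "'a poly" where "x0 = monom 1 e1"
  have x0: "x0 \<in> ms E1" unfolding x0_def using e1 by (simp add: monom_in_mono)
  have key: "x0 * f x = x * f x0" if x: "x \<in> ms E1" for x
  proof -
    have "f (x0 * x) = x0 * f x" using f(3) sub[OF x0] x by blast
    moreover have "f (x * x0) = x * f x0" using f(3) sub[OF x] x0 by blast
    ultimately show ?thesis by (simp add: mult.commute)
  qed
  obtain y where y: "y \<in> ms E1" "f y = monom 1 e2" using inv[of "monom 1 e2"] e2 by (auto simp: monom_in_mono)
  have "y * f x0 = monom 1 (e1 + e2)" using key[OF y(1)] y(2) unfolding x0_def by (simp add: mult_monom)
  then obtain a k where ak: "a \<noteq> 0" "f x0 = monom a k" using dvd_monom[of y "f x0" 1 "e1 + e2"] by auto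
  have CO: "coeff (f x) j = (if j + e1 < k then 0 else a * coeff x (j + e1 - k))" if x: "x \<in> ms E1" for x j
  proof -
    have "coeff (f x) j = coeff (monom 1 e1 * f x) (j + e1)" by (simp add: coeff_monom_mult)
    also have "\<dots> = coeff (monom a k * x) (j + e1)" using key[OF x] ak(2) unfolding x0_def by (simp add: mult.commute)
    also have "\<dots> = (if j + e1 < k then 0 else a * coeff x (j + e1 - k))" by (simp add: coeff_monom_mult)
    finally show ?thesis .
  qed
  have f0: "f 0 = 0"
  proof -
    have "f (0 + 0) = f 0 + f 0" using f(2) zero_in_mono by blast
    then have "f 0 = f 0 + f 0" by simp
    then show ?thesis by (metis add_cancel_right_right)
  qed
  have P1: "k \<le> n + e1 \<and> n + e1 - k \<in> E1" if n: "n \<in> E2" for n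
  proof -
    obtain y' where y': "y' \<in> ms E1" "f y' = monom 1 n" using inv[of "monom 1 n"] n by (auto simp: monom_in_mono)
    have "coeff (f y') n = 1" using y'(2) by simp
    then have "\<not> n + e1 < k" "coeff y' (n + e1 - k) \<noteq> 0" using CO[OF y'(1), of n] by (auto split: if_splits)
    then show ?thesis using y'(1) unfolding ms_def by auto
  qed
  have P2: "e1 \<le> m + k \<and> m + k - e1 \<in> E2" if m: "m \<in> E1" for m
  proof -
    have xm: "monom 1 m \<in> (ms E1 :: 'a poly set)" using m by (simp add: monom_in_mono)
    have "f (monom 1 m) \<noteq> 0"
    proof
      assume "f (monom 1 m) = 0"
      then have "f (monom 1 m) = f 0" using f0 by simp
      then have "monom 1 m = (0 :: 'a poly)" using inj xm zero_in_mono unfolding inj_on_def by blast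
      then show False by simp
    qed
    then obtain j where j: "coeff (f (monom 1 m)) j \<noteq> 0" by (metis coeff_0 poly_eqI)
    then have "\<not> j + e1 < k" "coeff (monom 1 m :: 'a poly) (j + e1 - k) \<noteq> 0"
      using CO[OF xm, of j] by (auto split: if_splits)
    then have jm: "j + e1 - k = m" "k \<le> j + e1" by (auto split: if_splits)
    have "j \<in> E2" using fM[OF xm] j unfolding ms_def by auto
    moreover have "m + k - e1 = j" "e1 \<le> m + k" using jm by auto
    ultimately show ?thesis by simp
  qed
  show ?thesis using P1 P2 by blast
qed

definition gen :: "nat set \<Rightarrow> 'a::field poly list \<Rightarrow> 'a poly set" where
  "gen H gs = {\<Sum>i<length gs. r i * gs ! i | r. \<forall>i<length gs. r i \<in> sgring H}"

lemma mu_eq: "mu H I = (LEAST n. \<exists>gs. length gs = n \<and> I = gen H gs)"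
proof -
  have e: "\<And>gs n. length gs = n \<Longrightarrow> gen H gs = {\<Sum>i<n. r i * gs ! i | r. \<forall>i<n. r i \<in> sgring H}"
    unfolding gen_def by simp
  have "\<And>n. (\<exists>gs. length gs = n \<and> I = {\<Sum>i<n. r i * gs ! i | r. \<forall>i<n. r i \<in> sgring H})
      = (\<exists>gs. length gs = n \<and> I = gen H gs)"
    using e by blast
  then show ?thesis unfolding mu_def by simp
qed

lemma mu_le: "I = gen H gs \<Longrightarrow> mu H I \<le> length gs"
  unfolding mu_eq by (rule Least_le) blast

lemma mu_ge2:
  assumes "I = gen H gs" "\<forall>gs. length gs \<le> 1 \<longrightarrow> I \<noteq> gen H gs"
  shows "2 \<le> mu H I"
proof -
  have "\<exists>gs'. length gs' = mu H I \<and> I = gen H gs'"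
    unfolding mu_eq by (rule LeastI[of _ "length gs"]) (use assms(1) in blast)
  then obtain gs' where gs': "length gs' = mu H I" "I = gen H gs'" by blast
  show ?thesis
  proof (rule ccontr)
    assume "\<not> 2 \<le> mu H I"
    then have "length gs' \<le> 1" using gs'(1) by simp
    then show False using assms(2) gs'(2) by blast
  qed
qed

lemma gen_nil: "gen H [] = {0}"
  unfolding gen_def by auto

lemma gen_single: "gen H [g] = {r * g | r. r \<in> sgring H}"
  unfolding gen_def
proof (rule equalityI)
  show "{\<Sum>i<length [g]. r i * [g] ! i |r. \<forall>i<length [g]. r i \<in> sgring H} \<subseteq> {r * g |r. r \<in> sgring H}"
    by auto
  show "{r * g |r. r \<in> sgring H} \<subseteq> {\<Sum>i<length [g]. r i * [g] ! i |r. \<forall>i<length [g]. r i \<in> sgring H}"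
  proof
    fix x assume "x \<in> {r * g |r. r \<in> sgring H}"
    then obtain r where "r \<in> sgring H" "x = r * g" by auto
    then show "x \<in> {\<Sum>i<length [g]. r i * [g] ! i |r. \<forall>i<length [g]. r i \<in> sgring H}"
      by (intro CollectI exI[of _ "\<lambda>_. r"]) simp
  qed
qed

lemma principal_gen: "principal_ideal H x = gen H [x]"
  unfolding principal_ideal_def gen_single ..

lemma prin_form:
  assumes NS: "numerical_semigroup H" and E: "E \<subseteq> H" "\<forall>e\<in>E. \<forall>h\<in>H. e + h \<in> E" "E \<noteq> {}"
    and g: "(ms E :: 'a::field poly set) = gen H [g]"
  shows "\<exists>d. E = {n. d \<le> n \<and> n - d \<in> H}"
proof -
  obtain e where e: "e \<in> E" using E(3) by blast
  have gs: "gen H [g] = {r * g | r. r \<in> ms H}" unfolding gen_single sgring_ms ..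
  have "g \<noteq> 0"
  proof
    assume "g = 0"
    have "monom 1 e \<in> (ms E :: 'a poly set)" using e by (simp add: monom_in_mono)
    then obtain r :: "'a poly" where "monom 1 e = r * g" using g gs by blast
    then show False using \<open>g = 0\<close> by simp
  qed
  have iso: "module_iso H (ms H) (ms E :: 'a poly set)"
    unfolding module_iso_def
  proof (intro exI[of _ "\<lambda>r. r * g"] conjI ballI)
    show "bij_betw (\<lambda>r. r * g) (ms H) (ms E)"
    proof (rule bij_betw_imageI)
      show "inj_on (\<lambda>r. r * g) (ms H)" using \<open>g \<noteq> 0\<close> by (auto simp: inj_on_def)
      show "(\<lambda>r. r * g) ` ms H = ms E" unfolding g gs by blast
    qed
  qed (simp_all add: distrib_right mult.assoc)
  have clH: "\<forall>e\<in>H. \<forall>h\<in>H. e + h \<in> H" using NS unfolding numerical_semigroup_def by auto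
  obtain p q where pq: "\<forall>n\<in>E. q \<le> n + p \<and> n + p - q \<in> H" "\<forall>m\<in>H. p \<le> m + q \<and> m + q - p \<in> E"
    using shift_iso[OF subset_refl clH ns_0[OF NS] e iso] by blast
  have "p \<le> q" using pq(2) ns_0[OF NS] by auto
  have "E = {n. q - p \<le> n \<and> n - (q - p) \<in> H}"
  proof (rule equalityI)
    show "E \<subseteq> {n. q - p \<le> n \<and> n - (q - p) \<in> H}"
    proof
      fix n assume "n \<in> E"
      then have "q \<le> n + p" "n + p - q \<in> H" using pq(1) by auto
      then show "n \<in> {n. q - p \<le> n \<and> n - (q - p) \<in> H}" using \<open>p \<le> q\<close> by auto
    qed
    show "{n. q - p \<le> n \<and> n - (q - p) \<in> H} \<subseteq> E"
    proof
      fix n assume "n \<in> {n. q - p \<le> n \<and> n - (q - p) \<in> H}"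
      then have n: "q - p \<le> n" "n - (q - p) \<in> H" by auto
      then have "n - (q - p) + q - p \<in> E" using pq(2) by blast
      moreover have "n - (q - p) + q - p = n" using n(1) \<open>p \<le> q\<close> by auto
      ultimately show "n \<in> E" by metis
    qed
  qed
  then show ?thesis by blast
qed

lemma gen_delta:
  assumes "0 \<in> H" "i < length gs" "r0 \<in> sgring H"
  shows "r0 * gs ! i \<in> gen H gs"
proof -
  have "(\<Sum>j<length gs. (if j = i then r0 else 0) * gs ! j) = (\<Sum>j<length gs. if j = i then r0 * gs ! j else 0)"
    by (intro sum.cong) auto
  also have "\<dots> = r0 * gs ! i" using assms(2) by (simp add: sum.delta)
  finally have eq: "(\<Sum>j<length gs. (if j = i then r0 else 0) * gs ! j) = r0 * gs ! i" .
  have "\<forall>j<length gs. (if j = i then r0 else 0) \<in> sgring H"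
    using assms(3) by (auto simp: sgring_ms zero_in_mono)
  then show ?thesis unfolding gen_def using eq by (intro CollectI exI[of _ "\<lambda>j. if j = i then r0 else 0"]) auto
qed

lemma gen_add: "x \<in> gen H gs \<Longrightarrow> y \<in> gen H gs \<Longrightarrow> x + y \<in> gen H gs"
proof -
  assume "x \<in> gen H gs" "y \<in> gen H gs"
  then obtain r s where r: "\<forall>i<length gs. r i \<in> sgring H" "x = (\<Sum>i<length gs. r i * gs ! i)"
    and s: "\<forall>i<length gs. s i \<in> sgring H" "y = (\<Sum>i<length gs. s i * gs ! i)"
    unfolding gen_def by blast
  have "x + y = (\<Sum>i<length gs. (r i + s i) * gs ! i)"
    unfolding r(2) s(2) by (simp add: sum.distrib distrib_right)
  moreover have "\<forall>i<length gs. r i + s i \<in> sgring H" using r(1) s(1) by (simp add: sgring_ms add_in_mono)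
  ultimately show ?thesis unfolding gen_def by (intro CollectI exI[of _ "\<lambda>i. r i + s i"] conjI)
qed

lemma gen_zero: "0 \<in> gen H gs"
  unfolding gen_def by (intro CollectI exI[of _ "\<lambda>_. 0"]) (auto simp: sgring_ms zero_in_mono)

lemma fin_gen:
  assumes NS: "numerical_semigroup H" and E: "E \<subseteq> H" "\<forall>e\<in>E. \<forall>h\<in>H. e + h \<in> E" and e0: "e0 \<in> E"
  shows "\<exists>gs. (ms E :: 'a::field poly set) = gen H gs"
proof -
  obtain N where N: "\<forall>n\<ge>N. n \<in> H" using ns_cond[OF NS] by blast
  define L where "L = sorted_list_of_set (E \<inter> {..e0 + N})"
  have setL: "set L = E \<inter> {..e0 + N}" unfolding L_def by simp
  define gs :: "'a poly list" where "gs = map (\<lambda>n. monom 1 n) L"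
  have cl': "\<forall>i\<in>H. \<forall>j\<in>E. i + j \<in> E" using E(2) by (metis add.commute)
  have "(ms E :: 'a poly set) = gen H gs"
  proof (rule equalityI)
    show "(ms E :: 'a poly set) \<subseteq> gen H gs"
    proof
      fix p :: "'a poly" assume p: "p \<in> ms E"
      show "p \<in> gen H gs"
      proof (rule mono_sum_monoms[OF gen_zero])
        show "\<forall>x\<in>gen H gs. \<forall>y\<in>gen H gs. x + y \<in> gen H gs" using gen_add by blast
        fix n assume c: "coeff p n \<noteq> 0"
        then have nE: "n \<in> E" using p unfolding ms_def by auto
        show "monom (coeff p n) n \<in> gen H gs"
        proof (cases "n \<le> e0 + N")
          case True
          then have "n \<in> set L" using setL nE by auto
          then obtain i where i: "i < length L" "L ! i = n" by (meson in_set_conv_nth)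
          have "[:coeff p n:] * gs ! i \<in> gen H gs"
            by (rule gen_delta) (use i ns_0[OF NS] in \<open>auto simp: gs_def const_in_sgring\<close>)
          then show ?thesis using i by (simp add: gs_def const_mult_monom smult_monom)
        next
          case False
          have "e0 \<in> set L" using setL e0 by auto
          then obtain i where i: "i < length L" "L ! i = e0" by (meson in_set_conv_nth)
          have "n - e0 \<in> H" using N False by auto
          then have "monom (coeff p n) (n - e0) * gs ! i \<in> gen H gs"
            by (intro gen_delta) (use i ns_0[OF NS] in \<open>auto simp: gs_def sgring_ms monom_in_mono\<close>)
          moreover have "monom (coeff p n) (n - e0) * gs ! i = monom (coeff p n) n"
            using i False by (simp add: gs_def mult_monom)
          ultimately show ?thesis by simp
        qed
      qed
    qed
    show "gen H gs \<subseteq> (ms E :: 'a poly set)"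
    proof
      fix x :: "'a poly" assume "x \<in> gen H gs"
      then obtain r where r: "\<forall>i<length gs. r i \<in> sgring H" "x = (\<Sum>i<length gs. r i * gs ! i)"
        unfolding gen_def by blast
      show "x \<in> ms E" unfolding r(2)
      proof (rule addclosed_sum[OF zero_in_mono])
        show "\<forall>x\<in>ms E. \<forall>y\<in>ms E. x + y \<in> ms E" using add_in_mono by blast
        show "\<forall>i\<in>{..<length gs}. r i * gs ! i \<in> ms E"
        proof
          fix i assume "i \<in> {..<length gs}"
          then have i: "i < length L" "r i \<in> ms H" using r(1) by (auto simp: gs_def sgring_ms)
          then have "L ! i \<in> E" using setL nth_mem by blast
          then have "gs ! i \<in> ms E" using i by (simp add: gs_def monom_in_mono)
          then show "r i * gs ! i \<in> ms E" using mult_in_mono[OF cl' i(2)] by blast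
        qed
      qed
    qed
  qed
  then show ?thesis by blast
qed

definition Em :: "nat set \<Rightarrow> nat \<Rightarrow> nat set" where
  "Em H m = {n \<in> H. n + m \<in> H}"

lemma colon_ms: "colon_monom H m = (ms (Em H m) :: 'a::field poly set)"
proof (rule equalityI)
  show "colon_monom H m \<subseteq> (ms (Em H m) :: 'a poly set)"
  proof
    fix x :: "'a poly" assume "x \<in> colon_monom H m"
    then have x: "x \<in> ms H" "x * monom 1 m \<in> ms H" unfolding colon_monom_def sgring_ms by auto
    show "x \<in> ms (Em H m)" unfolding ms_def
    proof (rule CollectI, intro allI impI)
      fix n assume c: "coeff x n \<noteq> 0"
      have "coeff (monom 1 m * x) (n + m) \<noteq> 0" using c by (simp add: coeff_monom_mult)
      then have "n + m \<in> H" using x(2) unfolding ms_def by (auto simp: mult.commute)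
      moreover have "n \<in> H" using x(1) c unfolding ms_def by auto
      ultimately show "n \<in> Em H m" unfolding Em_def by simp
    qed
  qed
  show "(ms (Em H m) :: 'a poly set) \<subseteq> colon_monom H m"
  proof
    fix x :: "'a poly" assume x: "x \<in> ms (Em H m)"
    have "x \<in> ms H" using x mono_mono[of "Em H m" H] unfolding Em_def by auto
    moreover have "x * monom 1 m \<in> ms H"
      by (rule mult_in_mono[of "Em H m" "{m}"]) (use x in \<open>auto simp: Em_def monom_in_mono\<close>)
    ultimately show "x \<in> colon_monom H m" unfolding colon_monom_def sgring_ms by auto
  qed
qed

lemma Em_sub: "Em H m \<subseteq> H" unfolding Em_def by auto

lemma Em_cl: "numerical_semigroup H \<Longrightarrow> \<forall>e\<in>Em H m. \<forall>h\<in>H. e + h \<in> Em H m"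
  unfolding Em_def by (auto simp: ns_add) (metis add.commute add.left_commute ns_add)

lemma Em_above: "symF H F \<Longrightarrow> F < n \<Longrightarrow> n \<in> Em H m"
  unfolding Em_def using symF_above by auto

lemma F_notin_Em: "symF H F \<Longrightarrow> F \<notin> Em H m"
  unfolding Em_def symF_def by auto



lemma ms_empty: "ms {} = {0}"
  unfolding ms_def by (auto simp: poly_eq_iff)

lemma colon_in_X:
  assumes NS: "numerical_semigroup H" and S: "symF H F" and m: "m \<notin> H"
  shows "(colon_monom H m :: 'a::field poly set) \<in> X_R H"
proof -
  have mF: "m \<le> F" "F - m \<in> H" using S m unfolding symF_def by auto
  have gr: "graded_ideal H (ms (Em H m) :: 'a poly set)"
    by (rule graded_ideal_mono[OF Em_sub Em_cl[OF NS]])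
  have soc0: "soc H (Em H m) (F - m)"
    unfolding soc_def
  proof (intro conjI ballI impI)
    show "F - m \<in> H" by (rule mF(2))
    show "F - m \<notin> Em H m" using mF(1) S unfolding Em_def symF_def by auto
    fix k assume "k \<in> H" "0 < k"
    then have a: "F - m + k \<in> H" using mF ns_add[OF NS] by blast
    have "F < F - m + k + m" using mF(1) \<open>0 < k\<close> by simp
    then have "F - m + k \<in> H" "F - m + k + m \<in> H" using a symF_above[OF S] by auto
    then show "F - m + k \<in> Em H m" unfolding Em_def by simp
  qed
  have uniq: "n = F - m" if n: "soc H (Em H m) n" for n
  proof -
    have n1: "n \<in> H" "n + m \<notin> H" "\<forall>k\<in>H. 0 < k \<longrightarrow> n + k + m \<in> H"
      using n unfolding soc_def Em_def by auto
    have g: "n + m \<le> F" "F - (n + m) \<in> H" using S n1(2) unfolding symF_def by auto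
    show ?thesis
    proof (rule ccontr)
      assume "n \<noteq> F - m"
      then have "0 < F - (n + m)" using g(1) by auto
      then have "n + (F - (n + m)) + m \<in> H" using n1(3) g(2) by blast
      moreover have "n + (F - (n + m)) + m = F" using g(1) by auto
      ultimately show False using S unfolding symF_def by auto
    qed
  qed
  have gor: "gorenstein_quot H (ms (Em H m) :: 'a poly set)"
    unfolding gor_mono[OF Em_sub] using soc0 uniq by blast
  have e0: "Suc F \<in> Em H m" using Em_above[OF S] by auto
  obtain gs where gs: "(ms (Em H m) :: 'a poly set) = gen H gs"
    using fin_gen[OF NS Em_sub Em_cl[OF NS] e0] by blast
  have "\<forall>gs. length gs \<le> 1 \<longrightarrow> (ms (Em H m) :: 'a poly set) \<noteq> gen H gs"
  proof (intro allI impI)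
    fix gs' :: "'a poly list" assume l: "length gs' \<le> 1"
    show "ms (Em H m) \<noteq> gen H gs'"
    proof
      assume eq: "ms (Em H m) = gen H gs'"
      show False
      proof (cases gs')
        case Nil
        have "monom 1 (Suc F) \<in> (ms (Em H m) :: 'a poly set)" using e0 by (simp add: monom_in_mono)
        then show False using eq Nil by (simp add: gen_nil)
      next
        case (Cons g rest)
        then have "gs' = [g]" using l by simp
        then obtain d where d: "Em H m = {n. d \<le> n \<and> n - d \<in> H}"
          using prin_form[OF NS Em_sub Em_cl[OF NS] _ eq[unfolded \<open>gs' = [g]\<close>]] e0 by blast
        have "d \<in> Em H m" unfolding d using ns_0[OF NS] by simp
        then have dH: "d \<in> H" "d + m \<in> H" unfolding Em_def by auto
        show False
        proof (cases "d = 0")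
          case True then show False using dH m by simp
        next
          case False
          then have "F + d \<in> Em H m" using Em_above[OF S] by simp
          then have "F + d - d \<in> H" unfolding d by simp
          then show False using S unfolding symF_def by simp
        qed
      qed
    qed
  qed
  then have "2 \<le> mu H (ms (Em H m) :: 'a poly set)" using mu_ge2[OF gs] by blast
  then show ?thesis unfolding X_R_def colon_ms using gr gor by simp
qed

lemma X_facts:
  fixes I :: "'a::field poly set"
  assumes NS: "numerical_semigroup H" and I: "I \<in> X_R H"
  defines "E \<equiv> {n. monom 1 n \<in> I}"
  shows "I = ms E" "E \<subseteq> H" "\<forall>e\<in>E. \<forall>h\<in>H. e + h \<in> E" "E \<noteq> {}"
    "\<forall>d. E \<noteq> {n. d \<le> n \<and> n - d \<in> H}" "\<exists>!n. soc H E n"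
proof -
  have gr: "graded_ideal H I" and gor: "gorenstein_quot H I" and mu: "2 \<le> mu H I"
    using I unfolding X_R_def by auto
  show IE: "I = ms E" unfolding E_def by (rule graded_mono[OF gr ns_0[OF NS]])
  have Isub: "I \<subseteq> sgring H" and Imul: "\<forall>r\<in>sgring H. \<forall>x\<in>I. r * x \<in> I"
    using gr unfolding graded_ideal_def is_ideal_def is_Rsubmodule_def by auto
  show EH: "E \<subseteq> H"
  proof
    fix n assume "n \<in> E"
    then have "(monom 1 n :: 'a poly) \<in> I" unfolding E_def by simp
    then have "(monom 1 n :: 'a poly) \<in> sgring H" using Isub by blast
    then show "n \<in> H" unfolding sgring_ms by (simp add: monom_in_mono)
  qed
  show "\<forall>e\<in>E. \<forall>h\<in>H. e + h \<in> E"
  proof (intro ballI)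
    fix e h assume "e \<in> E" "h \<in> H"
    then have "monom 1 h * monom 1 e \<in> I" using Imul unfolding E_def sgring_ms
      by (auto simp: monom_in_mono)
    then show "e + h \<in> E" unfolding E_def by (simp add: mult_monom add.commute)
  qed
  show "E \<noteq> {}"
  proof
    assume "E = {}"
    then have "I = gen H []" using IE by (simp add: ms_empty gen_nil)
    then show False using mu_le[of I H "[]"] mu by simp
  qed
  show "\<forall>d. E \<noteq> {n. d \<le> n \<and> n - d \<in> H}"
  proof (intro allI notI)
    fix d assume "E = {n. d \<le> n \<and> n - d \<in> H}"
    then have "I = gen H [monom 1 d]" using IE principal_ms[of H d] principal_gen by metis
    then show False using mu_le[of I H "[monom 1 d]"] mu by simp
  qed
  have "gorenstein_quot H (ms E :: 'a poly set)" using gor IE by simp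
  then show "\<exists>!n. soc H E n" by (simp add: gor_mono[OF EH])
qed

lemma classify:
  fixes I :: "'a::field poly set"
  assumes NS: "numerical_semigroup H" and S: "symF H F" and I: "I \<in> X_R H"
  shows "\<exists>m. m \<notin> H \<and> iso_class H I = iso_class H (colon_monom H m)"
proof -
  define E where "E = {n. monom 1 n \<in> I}"
  note XF = X_facts[OF NS I, folded E_def]
  obtain n0 where n0: "soc H E n0" "\<forall>n. soc H E n \<longrightarrow> n = n0" using XF(6) by blast
  obtain e where e: "e \<in> E" using XF(4) by blast
  obtain N where N: "\<forall>n\<ge>N. n \<in> H" using ns_cond[OF NS] by blast
  have NE: "\<forall>j\<ge>e + N. j \<in> E"
  proof (intro allI impI)
    fix j assume "e + N \<le> j"
    then have "j - e \<in> H" using N by auto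
    then have "e + (j - e) \<in> E" using XF(3) e by blast
    then show "j \<in> E" using \<open>e + N \<le> j\<close> by simp
  qed
  have charE: "n \<in> E \<longleftrightarrow> n \<in> H \<and> \<not> (n \<le> n0 \<and> n0 - n \<in> H)" for n
  proof
    assume nE: "n \<in> E"
    then have "n \<in> H" using XF(2) by auto
    moreover have "\<not> (n \<le> n0 \<and> n0 - n \<in> H)"
    proof
      assume a: "n \<le> n0 \<and> n0 - n \<in> H"
      then have "n + (n0 - n) \<in> E" using XF(3) nE by blast
      then show False using a n0(1) unfolding soc_def by auto
    qed
    ultimately show "n \<in> H \<and> \<not> (n \<le> n0 \<and> n0 - n \<in> H)" by simp
  next
    assume a: "n \<in> H \<and> \<not> (n \<le> n0 \<and> n0 - n \<in> H)"
    show "n \<in> E"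
    proof (rule ccontr)
      assume "n \<notin> E"
      then have "n \<le> n0 \<and> n0 - n \<in> H" using max_soc[OF NS NE n0(1) n0(2)] a by blast
      then show False using a by blast
    qed
  qed
  have isub: "is_Rsubmodule H (colon_monom H k :: 'a poly set)" for k
    using graded_ideal_mono[OF Em_sub Em_cl[OF NS], of k] unfolding colon_ms graded_ideal_def is_ideal_def by auto
  show ?thesis
  proof (cases "n0 \<le> F")
    case True
    define m where "m = F - n0"
    have Eeq: "E = Em H m"
    proof (rule set_eqI)
      fix n
      show "n \<in> E \<longleftrightarrow> n \<in> Em H m"
      proof (cases "n \<le> n0")
        case True
        then have "n + m \<le> F" "n0 - n = F - (n + m)" using \<open>n0 \<le> F\<close> unfolding m_def by auto
        then show ?thesis unfolding charE Em_def using symF_iff[OF NS S, of "n + m"] True by auto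
      next
        case False
        then have "F < n + m" using \<open>n0 \<le> F\<close> unfolding m_def by auto
        then show ?thesis unfolding charE Em_def using symF_above[OF S] False by auto
      qed
    qed
    have "m \<notin> H"
    proof
      assume "m \<in> H"
      then have "E = {n. 0 \<le> n \<and> n - 0 \<in> H}" unfolding Eeq Em_def using ns_add[OF NS] by auto
      then show False using XF(5) by blast
    qed
    moreover have "I = colon_monom H m" using XF(1) Eeq colon_ms by metis
    ultimately show ?thesis by blast
  next
    case False
    define d where "d = n0 - F"
    have Eeq: "n \<in> E \<longleftrightarrow> n \<in> H \<and> d \<le> n \<and> n - d \<in> H" for n
    proof (cases "n \<le> n0")
      case True
      show ?thesis
      proof (cases "d \<le> n")
        case True
        then have "n - d \<le> F" "n0 - n = F - (n - d)" using \<open>n \<le> n0\<close> \<open>\<not> n0 \<le> F\<close> unfolding d_def by auto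
        then show ?thesis unfolding charE using symF_iff[OF NS S, of "n - d"] True \<open>n \<le> n0\<close> by auto
      next
        case False
        then have "F < n0 - n" using \<open>\<not> n0 \<le> F\<close> unfolding d_def by auto
        then show ?thesis unfolding charE using symF_above[OF S] False \<open>n \<le> n0\<close> by auto
      qed
    next
      case False
      then have "F < n - d" "d \<le> n" using \<open>\<not> n0 \<le> F\<close> unfolding d_def by auto
      then show ?thesis unfolding charE using symF_above[OF S] False by auto
    qed
    have dH: "d \<notin> H"
    proof
      assume "d \<in> H"
      have "E = {n. d \<le> n \<and> n - d \<in> H}"
      proof (rule set_eqI)
        fix n
        have "d \<le> n \<Longrightarrow> n - d \<in> H \<Longrightarrow> n \<in> H" using ns_add[OF NS \<open>d \<in> H\<close>, of "n - d"] by simp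
        then show "n \<in> E \<longleftrightarrow> n \<in> {n. d \<le> n \<and> n - d \<in> H}" unfolding Eeq by auto
      qed
      then show False using XF(5) by blast
    qed
    have iso: "module_iso H (colon_monom H d) I"
      unfolding module_iso_def
    proof (intro exI[of _ "\<lambda>x. monom 1 d * x"] conjI ballI)
      show "bij_betw (\<lambda>x. monom 1 d * x) (colon_monom H d) I"
      proof (rule bij_betw_imageI)
        show "inj_on (\<lambda>x. monom 1 d * x) (colon_monom H d)" by (auto simp: inj_on_def)
        show "(\<lambda>x. monom 1 d * x) ` colon_monom H d = I"
        proof (rule equalityI)
          show "(\<lambda>x. monom 1 d * x) ` colon_monom H d \<subseteq> I"
          proof
            fix y :: "'a poly" assume "y \<in> (\<lambda>x. monom 1 d * x) ` colon_monom H d"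
            then obtain x :: "'a poly" where x: "x \<in> ms (Em H d)" "y = monom 1 d * x" unfolding colon_ms by auto
            have "monom 1 d * x \<in> ms E"
              by (rule mult_in_mono[of "{d}" "Em H d"]) (use x(1) in \<open>auto simp: monom_in_mono Em_def Eeq add.commute\<close>)
            then show "y \<in> I" using x(2) XF(1) by simp
          qed
          show "I \<subseteq> (\<lambda>x. monom 1 d * x) ` colon_monom H d"
          proof
            fix p assume "p \<in> I"
            then have p: "p \<in> ms E" using XF(1) by simp
            have "\<exists>y\<in>ms (Em H d). p = monom 1 d * y"
            proof (rule shift_exists)
              fix n assume "coeff p n \<noteq> 0"
              then have "n \<in> E" using p unfolding ms_def by auto
              then show "d \<le> n \<and> n - d \<in> Em H d" unfolding Eeq Em_def by auto
            qed
            then show "p \<in> (\<lambda>x. monom 1 d * x) ` colon_monom H d" unfolding colon_ms by auto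
          qed
        qed
      qed
    qed (simp_all add: algebra_simps)
    have "iso_class H (colon_monom H d) = iso_class H I" by (rule iso_class_eq[OF isub iso])
    then show ?thesis using dH by metis
  qed
qed

lemma class_inj:
  assumes NS: "numerical_semigroup H" and S: "symF H F" and m1: "m1 \<notin> H" and m2: "m2 \<notin> H"
    and eq: "iso_class H (colon_monom H m1 :: 'a::field poly set) = iso_class H (colon_monom H m2)"
  shows "m1 = m2"
proof -
  have isub: "is_Rsubmodule H (colon_monom H k :: 'a poly set)" for k
    using graded_ideal_mono[OF Em_sub Em_cl[OF NS], of k] unfolding colon_ms graded_ideal_def is_ideal_def by auto
  have "colon_monom H m2 \<in> iso_class H (colon_monom H m2 :: 'a poly set)"
    unfolding iso_class_def using isub iso_refl by blast
  then have "module_iso H (colon_monom H m1 :: 'a poly set) (colon_monom H m2)"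
    using eq unfolding iso_class_def by blast
  then have iso: "module_iso H (ms (Em H m1) :: 'a poly set) (ms (Em H m2))" unfolding colon_ms .
  have e: "Suc F \<in> Em H m1" "Suc F \<in> Em H m2" using Em_above[OF S] by auto
  obtain p q where pq: "\<forall>n\<in>Em H m2. q \<le> n + p \<and> n + p - q \<in> Em H m1"
      "\<forall>m\<in>Em H m1. p \<le> m + q \<and> m + q - p \<in> Em H m2"
    using shift_iso[OF Em_sub Em_cl[OF NS] e(1) e(2) iso] by blast
  have "p = q"
  proof (rule ccontr)
    assume "p \<noteq> q"
    then consider "p < q" | "q < p" by linarith
    then show False
    proof cases
      case 1
      have "F + (q - p) \<in> Em H m2" using 1 Em_above[OF S] by simp
      then have "F + (q - p) + p - q \<in> Em H m1" using pq(1) by blast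
      then show False using 1 F_notin_Em[OF S] by simp
    next
      case 2
      have "F + (p - q) \<in> Em H m1" using 2 Em_above[OF S] by simp
      then have "F + (p - q) + q - p \<in> Em H m2" using pq(2) by blast
      then show False using 2 F_notin_Em[OF S] by simp
    qed
  qed
  then have EE: "Em H m1 = Em H m2" using pq by auto
  have le: "a \<le> b" if a: "a \<notin> H" and b: "b \<notin> H" and E: "Em H a = Em H b" for a b
  proof -
    have bF: "b \<le> F" "F - b \<in> H" using S b unfolding symF_def by auto
    have "F - b \<notin> Em H b" using bF(1) S unfolding Em_def symF_def by auto
    then have "F - b \<notin> Em H a" using E by simp
    then have "F - b + a \<notin> H" using bF(2) unfolding Em_def by simp
    then have "F - b + a \<le> F" using symF_above[OF S] by (meson not_le)
    then show "a \<le> b" using bF(1) by simp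
  qed
  show ?thesis using le[OF m1 m2 EE] le[OF m2 m1 EE[symmetric]] by simp
qed

theorem corollary4p6:
  fixes H :: "nat set"
  assumes "numerical_semigroup H"
    and "gorenstein_sgring TYPE('a::field) H"
  shows "iso_class H ` (X_R H :: 'a poly set set)
           = iso_class H ` {colon_monom H m | m. m \<notin> H}
     \<and> real (card (iso_class H ` (X_R H :: 'a poly set set))) = real (conductor H) / 2"
proof -
  note NS = assms(1)
  have img: "{colon_monom H m | m. m \<notin> H} = (colon_monom H ` (UNIV - H) :: 'a poly set set)" by auto
  show ?thesis
  proof (cases "H = UNIV")
    case True
    have X: "(X_R H :: 'a poly set set) = {}"
    proof (rule ccontr)
      assume "(X_R H :: 'a poly set set) \<noteq> {}"
      then obtain I :: "'a poly set" where I: "I \<in> X_R H" by blast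
      define E where "E = {n. (monom 1 n :: 'a poly) \<in> I}"
      note XF = X_facts[OF NS I, folded E_def]
      define e0 where "e0 = (LEAST e. e \<in> E)"
      have e0: "e0 \<in> E" unfolding e0_def using XF(4) by (metis LeastI ex_in_conv)
      have "E = {n. e0 \<le> n \<and> n - e0 \<in> H}"
      proof (rule set_eqI)
        fix n
        show "n \<in> E \<longleftrightarrow> n \<in> {n. e0 \<le> n \<and> n - e0 \<in> H}"
        proof
          assume "n \<in> E" then show "n \<in> {n. e0 \<le> n \<and> n - e0 \<in> H}"
            unfolding e0_def using True by (auto intro: Least_le)
        next
          assume "n \<in> {n. e0 \<le> n \<and> n - e0 \<in> H}"
          then have "e0 \<le> n" by simp
          moreover have "e0 + (n - e0) \<in> E" using XF(3) e0 True by blast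
          ultimately show "n \<in> E" by simp
        qed
      qed
      then show False using XF(5) by blast
    qed
    have c: "conductor H = 0" unfolding conductor_def using True by simp
    show ?thesis using True X c by simp
  next
    case False
    then obtain x0 where "x0 \<notin> H" by blast
    then obtain F where S: "symF H F" using sym_exists[OF NS assms(2)] by blast
    have eq: "iso_class H ` (X_R H :: 'a poly set set) = iso_class H ` {colon_monom H m | m. m \<notin> H}"
    proof (rule equalityI)
      show "iso_class H ` (X_R H :: 'a poly set set) \<subseteq> iso_class H ` {colon_monom H m | m. m \<notin> H}"
      proof
        fix c assume "c \<in> iso_class H ` (X_R H :: 'a poly set set)"
        then obtain I :: "'a poly set" where I: "I \<in> X_R H" "c = iso_class H I" by blast
        then obtain m where "m \<notin> H" "iso_class H I = iso_class H (colon_monom H m)"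
          using classify[OF NS S I(1)] by blast
        then show "c \<in> iso_class H ` {colon_monom H m | m. m \<notin> H}" using I(2) by blast
      qed
      show "iso_class H ` {colon_monom H m | m. m \<notin> H} \<subseteq> iso_class H ` (X_R H :: 'a poly set set)"
        using colon_in_X[OF NS S] by blast
    qed
    have inj: "inj_on (\<lambda>m. iso_class H (colon_monom H m :: 'a poly set)) (UNIV - H)"
      unfolding inj_on_def using class_inj[OF NS S] by blast
    have "iso_class H ` {colon_monom H m | m. m \<notin> H} = (\<lambda>m. iso_class H (colon_monom H m :: 'a poly set)) ` (UNIV - H)"
      unfolding img by (simp add: image_image)
    then have "card (iso_class H ` (X_R H :: 'a poly set set)) = card (UNIV - H)"
      using eq card_image[OF inj] by simp
    moreover have "2 * card (UNIV - H) = Suc F" by (rule symF_card[OF NS S])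
    moreover have "conductor H = Suc F" by (rule symF_conductor[OF S])
    ultimately have "real (card (iso_class H ` (X_R H :: 'a poly set set))) = real (conductor H) / 2"
      by simp
    then show ?thesis using eq by simp
  qed
qed

end
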